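(* Let $\pi=(x_1,\dots,x_n)$ be a circular ordering of $X$ and let $\delta=\sum_{S}\lambda_S\delta_S$, the sum over all splits $S$ of $X$ that are circular with respect to $\pi$, with $\lambda_S\ge0$ for all such $S$ and $\lambda_S>0$ for every such split both of whose blocks have at least two elements (a generic circular decomposable metric). Then for every circular ordering $\sigma=(y_1,\dots,y_n)$ of $X$ different from $\pi$ (up to rotation and reversal), \[ \frac12\sum_{k=1}^n\delta(y_k,y_{k+1}) \;>\; \frac12\sum_{k=1}^n\delta(x_k,x_{k+1}). \]
   Context: $X=\{1,\dots,n\}$. A circular ordering is a listing $(x_1,\dots,x_n)$ of $X$ regarded cyclically ($x_{n+1}=x_1$); two listings are identified if they differ by rotation or reversal. A split $S=\{A,B\}$ is a partition of $X$ into two nonempty blocks; its split pseudometric is $\delta_S(x,y)=0$ if $x,y$ lie in the same block and $1$ otherwise. A split is circular with respect to $\pi$ if both of its blocks are contiguous arcs of $\pi$, i.e. it has the form $\{\{x_{i+1},\dots,x_j\},\{x_{j+1},\dots,x_i\}\}$ with indices read cyclically. The quantity $\frac12\sum_k\delta(y_k,y_{k+1})$ is the balanced length of $\delta$ with respect to the circular ordering $\sigma$ (half the length of the traveling salesman tour $\sigma$). *)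

theory Defs
  imports Complex_Main
begin

text \<open>Ground set X = {1..n}. A circular ordering is a list listing X without repetition,
  read cyclically: the successor of position k is position (k+1) mod n.\<close>

definition circ_ordering :: "nat \<Rightarrow> nat list \<Rightarrow> bool" where
  "circ_ordering n xs \<longleftrightarrow> distinct xs \<and> set xs = {1..n}"

definition same_circ :: "nat list \<Rightarrow> nat list \<Rightarrow> bool" where
  "same_circ ys xs \<longleftrightarrow> (\<exists>r. ys = rotate r xs \<or> ys = rotate r (rev xs))"

definition is_split :: "nat \<Rightarrow> nat set set \<Rightarrow> bool" where
  "is_split n S \<longleftrightarrow> (\<exists>A. A \<noteq> {} \<and> A \<subset> {1..n} \<and> S = {A, {1..n} - A})"

definition split_pm :: "nat set set \<Rightarrow> nat \<Rightarrow> nat \<Rightarrow> real" where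
  "split_pm S x y = (if \<exists>B\<in>S. x \<in> B \<and> y \<in> B then 0 else 1)"

definition arc :: "nat list \<Rightarrow> nat \<Rightarrow> nat \<Rightarrow> nat set" where
  "arc xs i m = {xs ! ((i + k) mod length xs) | k. k < m}"

definition circ_splits :: "nat \<Rightarrow> nat list \<Rightarrow> nat set set set" where
  "circ_splits n xs = {S. is_split n S \<and>
     (\<exists>i j m l. S = {arc xs i m, arc xs j l})}"

definition circ_comb :: "nat \<Rightarrow> nat list \<Rightarrow> (nat set set \<Rightarrow> real) \<Rightarrow> nat \<Rightarrow> nat \<Rightarrow> real" where
  "circ_comb n xs lam x y = (\<Sum>S\<in>circ_splits n xs. lam S * split_pm S x y)"

definition balanced_length :: "(nat \<Rightarrow> nat \<Rightarrow> real) \<Rightarrow> nat list \<Rightarrow> real" where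
  "balanced_length d ys = (1/2) * (\<Sum>k<length ys. d (ys ! k) (ys ! ((k + 1) mod length ys)))"

end

theory Submission
  imports Defs
begin

definition Nx :: "nat list \<Rightarrow> nat \<Rightarrow> nat \<Rightarrow> bool" where
  "Nx ys a b \<longleftrightarrow> (\<exists>k<length ys. ys!k = a \<and> ys!((k+1) mod length ys) = b)"

lemma Nx_fun: assumes "distinct ys" "Nx ys a b" "Nx ys a b'" shows "b = b'"
  using assms unfolding Nx_def by (metis nth_eq_iff_index_eq)

lemma suc_mod_cases: assumes "(a::nat) < L" shows "(a+1) mod L = (if a+1 < L then a+1 else 0)"
proof (cases "a+1 < L")
  case False
  then have "a+1 = L" using assms by auto
  then show ?thesis by simp
qed simp

lemma suc_mod_inj: assumes "(a::nat) < L" "b < L" "(a+1) mod L = (b+1) mod L" shows "a = b"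
proof -
  have "(a+1) mod L = (if a+1 < L then a+1 else 0)" using assms(1) by (rule suc_mod_cases)
  moreover have "(b+1) mod L = (if b+1 < L then b+1 else 0)" using assms(2) by (rule suc_mod_cases)
  ultimately show ?thesis using assms by (auto split: if_splits)
qed

lemma Nx_inj: assumes "distinct ys" "Nx ys a b" "Nx ys a' b" shows "a = a'"
proof -
  obtain k where k: "k < length ys" "ys!k = a" "ys!((k+1) mod length ys) = b" using assms unfolding Nx_def by auto
  obtain k' where k': "k' < length ys" "ys!k' = a'" "ys!((k'+1) mod length ys) = b" using assms unfolding Nx_def by auto
  have "(k+1) mod length ys = (k'+1) mod length ys"
    using k k' assms(1) nth_eq_iff_index_eq by (metis mod_less_divisor zero_less_iff_neq_zero not_less0 )
  then have "k = k'" using suc_mod_inj k k' by blast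
  then show ?thesis using k k' by simp
qed

lemma Nx_rev1: assumes "Nx ys b a" shows "Nx (rev ys) a b"
proof -
  define L where "L = length ys"
  obtain k where k: "k < L" "ys!k = b" "ys!((k+1) mod L) = a" using assms unfolding Nx_def L_def by auto
  show ?thesis
  proof (cases "k+1 < L")
    case True
    define j where "j = L - 2 - k"
    have "j < L" "rev ys ! j = a" "rev ys ! ((j+1) mod L) = b"
      using True k by (auto simp: j_def L_def rev_nth Suc_diff_Suc numeral_2_eq_2)
    then show ?thesis unfolding Nx_def L_def by auto
  next
    case False
    then have "k = L - 1" using k by auto
    have L0: "0 < L" using k by auto
    then have LL: "L - 1 + 1 = L" by simp
    then have "L - 1 < L" "rev ys ! (L-1) = a" "rev ys ! ((L-1+1) mod L) = b"
      using k L0 unfolding LL by (auto simp: L_def rev_nth \<open>k = L - 1\<close>)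
    then show ?thesis unfolding Nx_def L_def by auto
  qed
qed

lemma Nx_rev: "Nx (rev ys) a b \<longleftrightarrow> Nx ys b a"
  using Nx_rev1[of ys b a] Nx_rev1[of "rev ys" a b] by auto

lemma dir_lemma:
  assumes "distinct xs" "distinct zs"
    and h: "\<forall>i. i+1 < length xs \<longrightarrow> Nx zs (xs!i) (xs!(i+1)) \<or> Nx zs (xs!(i+1)) (xs!i)"
    and h0: "Nx zs (xs!0) (xs!1)"
  shows "\<forall>i. i+1 < length xs \<longrightarrow> Nx zs (xs!i) (xs!(i+1))"
proof (intro allI impI)
  fix i assume "i+1 < length xs"
  then show "Nx zs (xs!i) (xs!(i+1))"
  proof (induction i)
    case 0 then show ?case using h0 by simp
  next
    case (Suc i)
    then have IH: "Nx zs (xs!i) (xs!(i+1))" by simp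
    show ?case
    proof (rule ccontr)
      assume "\<not> ?case"
      then have "Nx zs (xs!(i+2)) (xs!(i+1))" using h Suc.prems by auto
      then have "xs!(i+2) = xs!i" using Nx_inj[OF assms(2) IH] by simp
      then show False using assms(1) Suc.prems nth_eq_iff_index_eq by fastforce
    qed
  qed
qed

lemma rot_lemma:
  assumes "distinct ys" "set xs = set ys" "length xs = length ys" "xs \<noteq> []"
    and h: "\<forall>i. i+1 < length xs \<longrightarrow> Nx ys (xs!i) (xs!(i+1))"
  shows "\<exists>c. xs = rotate c ys"
proof -
  define L where "L = length ys"
  have "xs!0 \<in> set ys" using assms by (metis nth_mem length_greater_0_conv)
  then obtain c where c: "c < L" "ys!c = xs!0" unfolding L_def by (metis in_set_conv_nth)
  have cl: "xs!i = ys!((c+i) mod L)" if "i < L" for i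
    using that
  proof (induction i)
    case 0 then show ?case using c by simp
  next
    case (Suc i)
    then have IH: "xs!i = ys!((c+i) mod L)" by simp
    have L0: "0 < L" using Suc by simp
    have "Nx ys (xs!i) (xs!(i+1))" using h Suc.prems assms(3) L_def by auto
    moreover have "Nx ys (ys!((c+i) mod L)) (ys!(((c+i) mod L + 1) mod L))"
      unfolding Nx_def L_def[symmetric] using L0 by (intro exI[of _ "(c+i) mod L"]) auto
    ultimately have "xs!(i+1) = ys!(((c+i) mod L + 1) mod L)" using Nx_fun[OF assms(1)] IH by metis
    then show ?case by (simp add: mod_Suc_eq)
  qed
  have "xs = rotate c ys"
    by (rule nth_equalityI) (auto simp: assms(3) nth_rotate cl L_def add.commute)
  then show ?thesis by blast
qed

lemma rot_inv: "\<exists>r. ys = rotate r (rotate c ys)"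
proof -
  let ?L = "length ys"
  have "rotate (?L - c mod ?L) (rotate c ys) = rotate (?L - c mod ?L + c) ys" by (simp add: rotate_rotate)
  also have "\<dots> = ys"
  proof (cases "?L = 0")
    case False
    have "(?L - c mod ?L + c) mod ?L = (?L - c mod ?L + c mod ?L) mod ?L" by (simp add: mod_add_right_eq)
    also have "\<dots> = 0" using False by simp
    finally show ?thesis by simp
  qed simp
  finally show ?thesis by metis
qed

lemma rot_inv_rev: "\<exists>r. rev (rotate c xs) = rotate r (rev xs)"
proof -
  let ?L = "length xs"
  have "rotate (?L - c mod ?L) (rev xs) = rev (rotate (?L - (?L - c mod ?L) mod ?L) xs)" by (rule rotate_rev)
  also have "rotate (?L - (?L - c mod ?L) mod ?L) xs = rotate c xs"
  proof (cases "?L = 0")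
    case False
    show ?thesis
    proof (cases "c mod ?L = 0")
      case True then show ?thesis using False by simp
    next
      case F2: False
      then have "(?L - c mod ?L) mod ?L = ?L - c mod ?L" using False by simp
      then have "?L - (?L - c mod ?L) mod ?L = c mod ?L" using False by (simp add: le_less)
      then show ?thesis by (metis rotate_conv_mod)
    qed
  qed simp
  finally show ?thesis by metis
qed

lemma adj_same:
  assumes "distinct xs" "distinct ys" "set xs = set ys"
    and h: "\<forall>i. i+1 < length xs \<longrightarrow> Nx ys (xs!i) (xs!(i+1)) \<or> Nx ys (xs!(i+1)) (xs!i)"
  shows "same_circ ys xs"
proof -
  have len: "length xs = length ys" using assms distinct_card by metis
  show ?thesis
  proof (cases "length xs \<le> 1")
    case True
    have "xs = ys"
    proof (cases xs)
      case Nil then show ?thesis using assms by simp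
    next
      case (Cons a t)
      then have "t = []" using True by simp
      then show ?thesis using assms len Cons by (cases ys) auto
    qed
    then show ?thesis unfolding same_circ_def by (intro exI[of _ 0]) simp
  next
    case False
    then have ne: "xs \<noteq> []" by auto
    show ?thesis
    proof (cases "Nx ys (xs!0) (xs!1)")
      case True
      have "\<forall>i. i+1 < length xs \<longrightarrow> Nx ys (xs!i) (xs!(i+1))"
        using dir_lemma[OF assms(1,2) h True] .
      then obtain c where "xs = rotate c ys" using rot_lemma[OF assms(2,3) len ne] by blast
      then show ?thesis unfolding same_circ_def using rot_inv by metis
    next
      case False
      have "Nx ys (xs!1) (xs!0)" using h[rule_format, of 0] \<open>\<not> length xs \<le> 1\<close> False by auto
      then have F: "Nx (rev ys) (xs!0) (xs!1)" using Nx_rev by auto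
      have h': "\<forall>i. i+1 < length xs \<longrightarrow> Nx (rev ys) (xs!i) (xs!(i+1)) \<or> Nx (rev ys) (xs!(i+1)) (xs!i)"
        using h Nx_rev by blast
      have "\<forall>i. i+1 < length xs \<longrightarrow> Nx (rev ys) (xs!i) (xs!(i+1))"
        using dir_lemma[OF assms(1) _ h' F] assms(2) by simp
      then obtain c where "xs = rotate c (rev ys)" using rot_lemma[of "rev ys" xs] assms len ne by auto
      then have "rev xs = rev (rotate c (rev ys))" by simp
      then obtain r where "rev xs = rotate r ys" using rot_inv_rev[of c "rev ys"] by auto
      then obtain r' where "ys = rotate r' (rev xs)" using rot_inv[of ys r] by metis
      then show ?thesis unfolding same_circ_def by auto
    qed
  qed
qed

definition cr :: "nat set set \<Rightarrow> nat list \<Rightarrow> real" where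
  "cr S zs = (\<Sum>k<length zs. split_pm S (zs!k) (zs!((k+1) mod length zs)))"

lemma pm_char: assumes "x \<in> X" "y \<in> X" "A \<subseteq> X"
  shows "split_pm {A, X - A} x y = (if (x \<in> A \<longleftrightarrow> y \<in> A) then 0 else 1)"
  using assms unfolding split_pm_def by auto

lemma pm_nonneg: "split_pm S x y \<ge> 0" unfolding split_pm_def by auto
lemma pm_le1: "split_pm S x y \<le> 1" unfolding split_pm_def by auto

lemma out_cross:
  assumes "set zs = X" "A \<subseteq> X" "A \<noteq> {}" "A \<noteq> X"
  shows "\<exists>k<length zs. zs!k \<in> A \<and> zs!((k+1) mod length zs) \<notin> A"
proof (rule ccontr)
  assume H: "\<not> ?thesis"
  define L where "L = length zs"
  obtain x where "x \<in> A" using assms by auto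
  then obtain k0 where k0: "k0 < L" "zs!k0 \<in> A" using assms unfolding L_def by (metis in_set_conv_nth subsetD)
  have all: "zs!((k0+t) mod L) \<in> A" for t
  proof (induction t)
    case 0 then show ?case using k0 by simp
  next
    case (Suc t)
    have "(k0+t) mod L < L" using k0 by simp
    then have "zs!(((k0+t) mod L + 1) mod L) \<in> A" using H Suc L_def by auto
    then show ?case by (simp add: mod_Suc_eq)
  qed
  have "X \<subseteq> A"
  proof
    fix x assume "x \<in> X"
    then obtain j where j: "j < L" "zs!j = x" using assms unfolding L_def by (metis in_set_conv_nth)
    have "(k0 + (L - k0 + j)) mod L = j" using j k0 by simp
    then show "x \<in> A" using all[of "L - k0 + j"] j by simp
  qed
  then show False using assms by auto
qed

lemma sum_ge_card:
  fixes f :: "nat \<Rightarrow> real"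
  assumes "K \<subseteq> {..<L}" "\<forall>k\<in>K. f k = 1" "\<forall>k. f k \<ge> 0"
  shows "(\<Sum>k<L. f k) \<ge> card K"
proof -
  have fin: "finite K" using assms finite_subset by blast
  have "(\<Sum>k\<in>K. f k) \<le> (\<Sum>k<L. f k)" by (rule sum_mono2) (use assms in auto)
  moreover have "(\<Sum>k\<in>K. f k) = card K" using assms by simp
  ultimately show ?thesis by simp
qed

lemma cr_ge2:
  assumes "set zs = X" "A \<subseteq> X" "A \<noteq> {}" "A \<noteq> X"
  shows "cr {A, X - A} zs \<ge> 2"
proof -
  define L where "L = length zs"
  obtain k1 where k1: "k1 < L" "zs!k1 \<in> A" "zs!((k1+1) mod L) \<notin> A"
    using out_cross[OF assms] L_def by auto
  obtain k2 where k2: "k2 < L" "zs!k2 \<in> X - A" "zs!((k2+1) mod L) \<notin> X - A"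
    using out_cross[OF assms(1), of "X - A"] assms L_def by auto
  have L0: "0 < L" using k1 by auto
  have inX: "zs!j \<in> X" if "j < L" for j using that assms(1) L_def by auto
  have "k1 \<noteq> k2" using k1 k2 by auto
  then have c: "card {k1, k2} = 2" by simp
  have "cr {A, X - A} zs \<ge> card {k1, k2}"
    unfolding cr_def L_def[symmetric]
    apply (rule sum_ge_card)
    using k1 k2 L0 inX pm_nonneg pm_char[OF _ _ assms(2)] by auto
  then show ?thesis using c by simp
qed

lemma split_form:
  assumes "S \<in> circ_splits n xs"
  shows "\<exists>i m. S = {arc xs i m, {1..n} - arc xs i m} \<and> arc xs i m \<subseteq> {1..n}
      \<and> arc xs i m \<noteq> {} \<and> arc xs i m \<noteq> {1..n}"
proof -
  have sp: "is_split n S" and ex: "\<exists>i j m l. S = {arc xs i m, arc xs j l}"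
    using assms unfolding circ_splits_def by blast+
  obtain A' where A': "A' \<noteq> {}" "A' \<subset> {1..n}" "S = {A', {1..n} - A'}"
    using sp unfolding is_split_def by blast
  obtain i j m l where S: "S = {arc xs i m, arc xs j l}" using ex by blast
  define B where "B = arc xs i m"
  have "B \<in> S" using S B_def by simp
  then have "B = A' \<or> B = {1..n} - A'" unfolding A'(3) by simp
  then have "S = {B, {1..n} - B} \<and> B \<subseteq> {1..n} \<and> B \<noteq> {} \<and> B \<noteq> {1..n}"
  proof
    assume "B = A'" then show ?thesis using A' by (simp add: psubset_eq)
  next
    assume h: "B = {1..n} - A'"
    then have e: "{1..n} - B = A'" using A'(2) by (simp add: double_diff psubset_eq)
    have "S = {A', B}" using A'(3) h by simp
    then have "S = {{1..n} - B, B}" using e by simp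
    then have "S = {B, {1..n} - B}" by (simp add: insert_commute)
    moreover have "B \<noteq> {}" using h A'(2) by auto
    moreover have "B \<noteq> {1..n}" using e A'(1) by auto
    ultimately show ?thesis using h by auto
  qed
  then show ?thesis unfolding B_def by blast
qed

lemma cr_le2:
  assumes "distinct xs" "set xs = {1..n}" "S \<in> circ_splits n xs"
  shows "cr S xs \<le> 2"
proof -
  define X where "X = {1..n::nat}"
  define L where "L = length xs"
  obtain i m where S: "S = {arc xs i m, X - arc xs i m}" "arc xs i m \<subseteq> X"
    using split_form[OF assms(3)] X_def by auto
  define A where "A = arc xs i m"
  have mem: "\<exists>t<m. k = (i+t) mod L" if "k < L" "xs!k \<in> A" for k
  proof -
    have "xs!k \<in> arc xs i m" using that A_def by simp
    then obtain t where t: "t < m" "xs!k = xs!((i+t) mod L)" unfolding arc_def L_def by blast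
    have "(i+t) mod L < L" using that by simp
    then have "k = (i+t) mod L" using nth_eq_iff_index_eq[OF assms(1), of k "(i+t) mod L"] t(2) that(1) L_def by simp
    then show ?thesis using t by blast
  qed
  have memI: "xs!((i+t) mod L) \<in> A" if "t < m" for t
    using that unfolding A_def arc_def L_def by auto
  define T where "T = {(i+m-1) mod L, (i+L-1) mod L}"
  have inX: "xs!j \<in> X" if "j < L" for j using that assms(2) L_def X_def by auto
  have cross: "k \<in> T" if k: "k < L" "split_pm S (xs!k) (xs!((k+1) mod L)) \<noteq> 0" for k
  proof -
    have L0: "0 < L" using k by auto
    have kk: "(k+1) mod L < L" using L0 by simp
    have "split_pm S (xs!k) (xs!((k+1) mod L)) = (if (xs!k \<in> A \<longleftrightarrow> xs!((k+1) mod L) \<in> A) then 0 else 1)"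
      using pm_char[OF inX[OF k(1)] inX[OF kk] S(2)] S(1) A_def by simp
    then have "(xs!k \<in> A) \<noteq> (xs!((k+1) mod L) \<in> A)"
      using k(2) by (simp split: if_splits)
    then consider "xs!k \<in> A" "xs!((k+1) mod L) \<notin> A" | "xs!k \<notin> A" "xs!((k+1) mod L) \<in> A" by blast
    then show ?thesis
    proof cases
      case 1
      obtain t where t: "t < m" "k = (i+t) mod L" using mem[OF k(1) 1(1)] by blast
      have "\<not> t + 1 < m"
      proof
        assume "t + 1 < m"
        then have "xs!((i+(t+1)) mod L) \<in> A" by (rule memI)
        moreover have "(i+(t+1)) mod L = (k+1) mod L" using t by (simp add: mod_Suc_eq)
        ultimately show False using 1 by simp
      qed
      then have "t = m - 1" using t by simp
      then show ?thesis using t T_def by (simp add: add.commute)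
    next
      case 2
      have k1: "(k+1) mod L < L" using L0 by simp
      obtain t where t: "t < m" "(k+1) mod L = (i+t) mod L" using mem[OF k1 2(2)] by blast
      show ?thesis
      proof (cases t)
        case 0
        have "((i+L-1) mod L + 1) mod L = (i + L - 1 + 1) mod L" by (simp add: mod_Suc_eq)
        also have "\<dots> = i mod L" using L0 by simp
        finally have "(k+1) mod L = ((i+L-1) mod L + 1) mod L" using t 0 by simp
        then have "k = (i+L-1) mod L" using suc_mod_inj[OF k(1), of "(i+L-1) mod L"] L0 by simp
        then show ?thesis using T_def by simp
      next
        case (Suc t')
        have "((i+t') mod L + 1) mod L = (i+t) mod L" using Suc by (simp add: mod_Suc_eq)
        then have "k = (i+t') mod L" using suc_mod_inj[OF k(1), of "(i+t') mod L"] L0 t by simp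
        moreover have "xs!((i+t') mod L) \<in> A" using memI t Suc by simp
        ultimately show ?thesis using 2 by simp
      qed
    qed
  qed
  have z: "\<forall>k\<in>{..<L} - {..<L} \<inter> T. split_pm S (xs!k) (xs!((k+1) mod L)) = 0"
  proof
    fix k assume "k \<in> {..<L} - {..<L} \<inter> T"
    then have "k < L" "k \<notin> T" by auto
    then show "split_pm S (xs!k) (xs!((k+1) mod L)) = 0" using cross by blast
  qed
  have "cr S xs = (\<Sum>k\<in>{..<L} \<inter> T. split_pm S (xs!k) (xs!((k+1) mod L)))"
    unfolding cr_def L_def[symmetric]
    using sum.mono_neutral_right[of "{..<L}" "{..<L} \<inter> T" "\<lambda>k. split_pm S (xs!k) (xs!((k+1) mod L))"] z
    by simp
  also have "\<dots> \<le> (\<Sum>k\<in>{..<L} \<inter> T. 1)" by (rule sum_mono) (rule pm_le1)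
  also have "\<dots> = card ({..<L} \<inter> T)" by simp
  also have "card ({..<L} \<inter> T) \<le> card T" by (rule card_mono) (auto simp: T_def)
  also have "card T \<le> 2" unfolding T_def by (simp add: card_insert_le_m1)
  finally show ?thesis by simp
qed

lemma cr_ge3:
  assumes ds: "distinct ys" and sy: "set ys = X" and ab: "a \<in> X" "b \<in> X" "a \<noteq> b"
    and nab: "\<not> Nx ys a b" and nba: "\<not> Nx ys b a" and L2: "2 \<le> length ys"
  shows "cr {{a,b}, X - {a,b}} ys \<ge> 3"
proof -
  define L where "L = length ys"
  define A where "A = {a,b}"
  have AX: "A \<subseteq> X" using ab A_def by auto
  obtain pa where pa: "pa < L" "ys!pa = a" using ab sy L_def by (metis in_set_conv_nth)
  obtain pb where pb: "pb < L" "ys!pb = b" using ab sy L_def by (metis in_set_conv_nth)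
  define q where "q = (pa + L - 1) mod L"
  have L2': "2 \<le> L" using L2 L_def by simp
  have inX: "ys!j \<in> X" if "j < L" for j using that sy L_def by auto
  have neq: "ys!i \<noteq> ys!j" if "i < L" "j < L" "i \<noteq> j" for i j
    using nth_eq_iff_index_eq[OF ds, of i j] that L_def by simp
  have sm: "(p+1) mod L \<noteq> p" if "p < L" for p using suc_mod_cases[OF that] L2' by auto
  have lt: "(p+1) mod L < L" for p using L2' by simp
  have c1: "ys!((pa+1) mod L) \<notin> A"
  proof -
    have "ys!((pa+1) mod L) \<noteq> a" using neq[OF lt pa(1) sm[OF pa(1)]] pa by simp
    moreover have "ys!((pa+1) mod L) \<noteq> b" using nab pa unfolding Nx_def L_def by auto
    ultimately show ?thesis using A_def by simp
  qed
  have c2: "ys!((pb+1) mod L) \<notin> A"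
  proof -
    have "ys!((pb+1) mod L) \<noteq> b" using neq[OF lt pb(1) sm[OF pb(1)]] pb by simp
    moreover have "ys!((pb+1) mod L) \<noteq> a" using nba pb unfolding Nx_def L_def by auto
    ultimately show ?thesis using A_def by simp
  qed
  have qL: "q < L" using L2' q_def by simp
  have qs: "(q+1) mod L = pa"
  proof -
    have "(q+1) mod L = (pa + L - 1 + 1) mod L" unfolding q_def by (simp add: mod_Suc_eq)
    also have "\<dots> = pa" using pa(1) by simp
    finally show ?thesis .
  qed
  have qpa: "q \<noteq> pa" using sm[OF qL] qs by simp
  have c3a: "ys!q \<noteq> a" using neq[OF qL pa(1) qpa] pa by simp
  have c3b: "ys!q \<noteq> b" using nba qL qs pa unfolding Nx_def L_def by auto
  have c3: "ys!q \<notin> A" using c3a c3b A_def by simp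
  have pab: "pa \<noteq> pb" using pa pb ab by auto
  have qpb: "q \<noteq> pb" using c3b pb by auto
  have card3: "card {pa, pb, q} = 3" using pab qpa qpb by auto
  have "cr {A, X - A} ys \<ge> card {pa, pb, q}"
    unfolding cr_def L_def[symmetric]
  proof (rule sum_ge_card)
    show "{pa, pb, q} \<subseteq> {..<L}" using pa pb qL by auto
    show "\<forall>k. 0 \<le> split_pm {A, X - A} (ys ! k) (ys ! ((k + 1) mod L))" using pm_nonneg by blast
    show "\<forall>k\<in>{pa, pb, q}. split_pm {A, X - A} (ys ! k) (ys ! ((k + 1) mod L)) = 1"
    proof
      fix k assume k: "k \<in> {pa, pb, q}"
      then have kL: "k < L" using pa pb qL by auto
      have e: "split_pm {A, X - A} (ys ! k) (ys ! ((k + 1) mod L)) =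
         (if (ys!k \<in> A \<longleftrightarrow> ys!((k+1) mod L) \<in> A) then 0 else 1)"
        by (rule pm_char[OF inX[OF kL] inX[OF lt] AX])
      have "(ys!k \<in> A) \<noteq> (ys!((k+1) mod L) \<in> A)"
        using k c1 c2 c3 qs pa pb A_def by auto
      then show "split_pm {A, X - A} (ys ! k) (ys ! ((k + 1) mod L)) = 1" using e by simp
    qed
  qed
  then show ?thesis using card3 A_def by simp
qed

lemma bl_decomp:
  assumes "finite C"
  shows "balanced_length (\<lambda>x y. \<Sum>S\<in>C. lam S * split_pm S x y) zs = (1/2) * (\<Sum>S\<in>C. lam S * cr S zs)"
  unfolding balanced_length_def cr_def
  by (simp add: sum_distrib_left sum.swap[of _ C])

lemma fin_splits: "finite (circ_splits n xs)"
proof -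
  have "circ_splits n xs \<subseteq> Pow (Pow {1..n})"
    unfolding circ_splits_def is_split_def by auto
  then show ?thesis by (rule finite_subset) simp
qed

lemma small_mod:
  fixes pa pb L :: nat
  assumes "pa < L" "pb < L" "pa \<noteq> pb" "L \<le> 3"
  shows "pb = (pa+1) mod L \<or> pa = (pb+1) mod L"
proof -
  have "L = 2 \<or> L = 3" using assms by arith
  then show ?thesis
  proof
    assume L: "L = 2"
    then have "(pa = 0 \<and> pb = 1) \<or> (pa = 1 \<and> pb = 0)" using assms by arith
    then show ?thesis using L by auto
  next
    assume L: "L = 3"
    then have "(pa = 0 \<and> pb = 1) \<or> (pa = 1 \<and> pb = 0) \<or> (pa = 0 \<and> pb = 2) \<or> (pa = 2 \<and> pb = 0)
       \<or> (pa = 1 \<and> pb = 2) \<or> (pa = 2 \<and> pb = 1)" using assms by arith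
    then show ?thesis using L by auto
  qed
qed

lemma small_adj:
  assumes "distinct ys" "a \<in> set ys" "b \<in> set ys" "a \<noteq> b" "length ys \<le> 3"
  shows "Nx ys a b \<or> Nx ys b a"
proof -
  define L where "L = length ys"
  obtain pa where pa: "pa < L" "ys!pa = a" using assms L_def by (metis in_set_conv_nth)
  obtain pb where pb: "pb < L" "ys!pb = b" using assms L_def by (metis in_set_conv_nth)
  have "pa \<noteq> pb" using pa pb assms by blast
  then have "pb = (pa+1) mod L \<or> pa = (pb+1) mod L"
    using small_mod pa pb assms(5) L_def by blast
  then show ?thesis
  proof
    assume "pb = (pa+1) mod L"
    then have "Nx ys a b" unfolding Nx_def L_def[symmetric] using pa pb by blast
    then show ?thesis ..
  next
    assume "pa = (pb+1) mod L"
    then have "Nx ys b a" unfolding Nx_def L_def[symmetric] using pa pb by blast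
    then show ?thesis ..
  qed
qed

lemma arc_two: assumes "i + 1 < length xs" shows "arc xs i 2 = {xs!i, xs!(i+1)}"
proof -
  have e: "{k::nat. k < 2} = {0, 1}" by auto
  have "arc xs i 2 = (\<lambda>k. xs ! ((i + k) mod length xs)) ` {k. k < 2}"
    unfolding arc_def by auto
  also have "\<dots> = {xs!i, xs!(i+1)}" unfolding e using assms by simp
  finally show ?thesis .
qed

lemma arc_rest:
  assumes "distinct xs" "i + 1 < length xs"
  shows "arc xs (i+2) (length xs - 2) = set xs - {xs!i, xs!(i+1)}"
proof -
  define L where "L = length xs"
  show ?thesis
  proof
    show "arc xs (i+2) (length xs - 2) \<subseteq> set xs - {xs!i, xs!(i+1)}"
    proof
      fix y assume "y \<in> arc xs (i+2) (length xs - 2)"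
      then obtain t where t: "t < L - 2" "y = xs!((i+2+t) mod L)" unfolding arc_def L_def by auto
      have r: "(i+2+t) mod L = (if i+2+t < L then i+2+t else i+2+t-L)"
        using t assms(2) L_def by (simp add: mod_if le_mod_geq)
      have L0: "0 < L" using assms(2) L_def by linarith
      have pL: "(i+2+t) mod L < L" using L0 by simp
      have "(i+2+t) mod L \<noteq> i" "(i+2+t) mod L \<noteq> i+1" using r t assms(2) L_def by auto
      then show "y \<in> set xs - {xs!i, xs!(i+1)}"
        using t pL assms nth_eq_iff_index_eq[OF assms(1)] L_def by (auto simp: nth_mem)
    qed
  next
    show "set xs - {xs!i, xs!(i+1)} \<subseteq> arc xs (i+2) (length xs - 2)"
    proof
      fix y assume y: "y \<in> set xs - {xs!i, xs!(i+1)}"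
      then obtain k where k: "k < L" "xs!k = y" unfolding L_def by (metis DiffD1 in_set_conv_nth)
      have "k \<noteq> i" "k \<noteq> i+1" using k y by auto
      define t where "t = (if i+2 \<le> k then k - (i+2) else k + L - (i+2))"
      have tL: "t < L - 2" using t_def k \<open>k \<noteq> i\<close> \<open>k \<noteq> i+1\<close> assms(2) L_def by auto
      have "(i+2+t) mod L = k"
      proof (cases "i+2 \<le> k")
        case True then show ?thesis using t_def k by simp
      next
        case False
        then have "i+2+t = k + L" using t_def \<open>k \<noteq> i\<close> \<open>k \<noteq> i+1\<close> k assms(2) L_def by auto
        then show ?thesis using k by simp
      qed
      then show "y \<in> arc xs (i+2) (length xs - 2)" unfolding arc_def L_def[symmetric] using tL k by force
    qed
  qed
qed

theorem mainTheorem13: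
  fixes n :: nat and xs ys :: "nat list" and lam :: "nat set set \<Rightarrow> real"
  assumes "circ_ordering n xs" and "circ_ordering n ys"
    and "\<forall>S\<in>circ_splits n xs. lam S \<ge> 0"
    and "\<forall>S\<in>circ_splits n xs. (\<forall>B\<in>S. card B \<ge> 2) \<longrightarrow> lam S > 0"
    and "\<not> same_circ ys xs"
  shows "balanced_length (circ_comb n xs lam) ys > balanced_length (circ_comb n xs lam) xs"
proof -
  define X where "X = {1..n}"
  define C where "C = circ_splits n xs"
  have dx: "distinct xs" and sx: "set xs = X" using assms(1) X_def circ_ordering_def by auto
  have dy: "distinct ys" and sy: "set ys = X" using assms(2) X_def circ_ordering_def by auto
  have lx: "length xs = n" using dx sx X_def distinct_card by fastforce
  have ly: "length ys = n" using dy sy X_def distinct_card by fastforce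
  have sxy: "set xs = set ys" using sx sy by simp
  obtain i where i: "i + 1 < n" "\<not> Nx ys (xs!i) (xs!(i+1))" "\<not> Nx ys (xs!(i+1)) (xs!i)"
    using adj_same[OF dx dy sxy] assms(5) lx by blast
  define a where "a = xs!i"
  define b where "b = xs!(i+1)"
  have aX: "a \<in> X" using i(1) lx sx a_def nth_mem[of i xs] by simp
  have bX: "b \<in> X" using i(1) lx sx b_def nth_mem[of "i+1" xs] by simp
  have abne: "a \<noteq> b" using nth_eq_iff_index_eq[OF dx, of i "i+1"] i(1) lx a_def b_def by simp
  have n4: "n \<ge> 4"
  proof (rule ccontr)
    assume "\<not> n \<ge> 4"
    then have "length ys \<le> 3" using ly by simp
    then have "Nx ys a b \<or> Nx ys b a" using small_adj[OF dy _ _ abne] aX bX sy by blast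
    then show False using i a_def b_def by blast
  qed
  define A where "A = {a, b}"
  define S0 where "S0 = {A, X - A}"
  have AX: "A \<subseteq> X" using aX bX A_def by simp
  have cardX: "card X = n" using X_def by simp
  have cA: "card A = 2" using abne A_def by simp
  have cXA: "card (X - A) = n - 2" using card_Diff_subset[OF _ AX] cA cardX A_def by simp
  have arcA: "arc xs i 2 = A" using arc_two[of i xs] i(1) lx A_def a_def b_def by simp
  have arcB: "arc xs (i+2) (n - 2) = X - A" using arc_rest[OF dx, of i] i(1) lx sx A_def a_def b_def by simp
  have S0C: "S0 \<in> C"
    unfolding C_def circ_splits_def
  proof (intro CollectI conjI)
    show "is_split n S0" unfolding is_split_def S0_def
      using AX cA cXA n4 X_def by (intro exI[of _ A]) auto
    show "\<exists>i j m l. S0 = {arc xs i m, arc xs j l}" unfolding S0_def using arcA arcB by metis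
  qed
  have lamS0: "lam S0 > 0" using assms(4) S0C C_def cA cXA n4 S0_def by auto
  have ge3: "cr S0 ys \<ge> 3" unfolding S0_def A_def
    using cr_ge3[OF dy sy aX bX abne] i a_def b_def ly n4 by simp
  have finC: "finite C" unfolding C_def by (rule fin_splits)
  have le2: "cr S xs \<le> 2" if "S \<in> C" for S using cr_le2[of xs n S] dx sx X_def that C_def by simp
  have ge2: "cr S ys \<ge> 2" if SC: "S \<in> C" for S
  proof -
    obtain B where "S = {B, X - B}" "B \<subseteq> X" "B \<noteq> {}" "B \<noteq> X"
    proof -
      have "S \<in> circ_splits n xs" using SC C_def by simp
      from split_form[OF this] obtain i m where "S = {arc xs i m, {1..n} - arc xs i m}" "arc xs i m \<subseteq> {1..n}"
        "arc xs i m \<noteq> {}" "arc xs i m \<noteq> {1..n}" by blast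
      then show ?thesis using that X_def by blast
    qed
    then show ?thesis using cr_ge2[OF sy] by simp
  qed
  have "(\<Sum>S\<in>C. lam S * cr S xs) < (\<Sum>S\<in>C. lam S * cr S ys)"
  proof (rule sum_strict_mono_ex1[OF finC])
    show "\<forall>S\<in>C. lam S * cr S xs \<le> lam S * cr S ys"
    proof
      fix S assume "S \<in> C"
      then show "lam S * cr S xs \<le> lam S * cr S ys"
        using le2 ge2 assms(3) C_def by (intro mult_left_mono) force+
    qed
    have "lam S0 * cr S0 xs < lam S0 * cr S0 ys"
      using le2[OF S0C] ge3 lamS0 by (intro mult_strict_left_mono) auto
    then show "\<exists>S\<in>C. lam S * cr S xs < lam S * cr S ys" using S0C by blast
  qed
  moreover have cc: "circ_comb n xs lam = (\<lambda>x y. \<Sum>S\<in>C. lam S * split_pm S x y)"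
    by (intro ext) (simp add: circ_comb_def C_def)
  ultimately show ?thesis
    unfolding cc using bl_decomp[OF finC, of lam ys] bl_decomp[OF finC, of lam xs] by linarith
qed

end
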